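(* Let $g$ be a non-negative integer and let $G$ be a connected graph of order $n$ which has a $g$-good-neighbor cut. Then $$0\leq g\leq \min\left\{\Delta(G),\left\lfloor \frac{n-3}{2}\right\rfloor\right\}$$ and $$e(G)\leq {n\choose 2}-(g+1)^2.$$
   Context: For a connected graph $G=(V,E)$ and integer $g\ge0$: a set $F\subseteq V$ is a $g$-good-neighbor faulty set if $|N(v)\cap (V-F)|\geq g$ for every $v\in V-F$; a $g$-good-neighbor cut is such an $F$ with $G-F$ disconnected. $e(G)$ is the number of edges and $\Delta(G)$ the maximum degree. *)

theory Defs
  imports Complex_Main
begin

definition simple_graph :: "'a set \<Rightarrow> 'a set set \<Rightarrow> bool" where
  "simple_graph V E \<longleftrightarrow> finite V \<and> (\<forall>e\<in>E. e \<subseteq> V \<and> card e = 2)"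

definition nbhd :: "'a set set \<Rightarrow> 'a \<Rightarrow> 'a set" where
  "nbhd E v = {u. {u, v} \<in> E}"

definition degree :: "'a set set \<Rightarrow> 'a \<Rightarrow> nat" where
  "degree E v = card (nbhd E v)"

definition max_degree :: "'a set \<Rightarrow> 'a set set \<Rightarrow> nat" where
  "max_degree V E = Max (degree E ` V)"

definition adj_in :: "'a set set \<Rightarrow> 'a set \<Rightarrow> ('a \<times> 'a) set" where
  "adj_in E S = {(u, v). u \<in> S \<and> v \<in> S \<and> {u, v} \<in> E}"

definition connected_on :: "'a set set \<Rightarrow> 'a set \<Rightarrow> bool" where
  "connected_on E S \<longleftrightarrow> S \<noteq> {} \<and> (\<forall>u\<in>S. \<forall>v\<in>S. (u, v) \<in> (adj_in E S)\<^sup>*)"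

definition connected_graph :: "'a set \<Rightarrow> 'a set set \<Rightarrow> bool" where
  "connected_graph V E \<longleftrightarrow> simple_graph V E \<and> connected_on E V"

definition disconnected_on :: "'a set set \<Rightarrow> 'a set \<Rightarrow> bool" where
  "disconnected_on E S \<longleftrightarrow> (\<exists>u\<in>S. \<exists>v\<in>S. (u, v) \<notin> (adj_in E S)\<^sup>*)"

definition good_neighbor_faulty_set :: "'a set \<Rightarrow> 'a set set \<Rightarrow> nat \<Rightarrow> 'a set \<Rightarrow> bool" where
  "good_neighbor_faulty_set V E g F \<longleftrightarrow>
     F \<subseteq> V \<and> (\<forall>v\<in>V - F. card (nbhd E v \<inter> (V - F)) \<ge> g)"

definition good_neighbor_cut :: "'a set \<Rightarrow> 'a set set \<Rightarrow> nat \<Rightarrow> 'a set \<Rightarrow> bool" where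
  "good_neighbor_cut V E g F \<longleftrightarrow>
     good_neighbor_faulty_set V E g F \<and> disconnected_on E (V - F)"

end

theory Submission
  imports Defs
begin

lemma key:
  assumes cg: "connected_graph V E" and cut: "good_neighbor_cut V E g F"
  shows "\<exists>C D. C \<subseteq> V - F \<and> D \<subseteq> V - F \<and> C \<inter> D = {} \<and> F \<noteq> {} \<and> F \<subseteq> V
     \<and> card C \<ge> g + 1 \<and> card D \<ge> g + 1 \<and> (\<forall>c\<in>C. \<forall>d\<in>D. {c,d} \<notin> E)
     \<and> (\<exists>u\<in>V. degree E u \<ge> g)"
proof -
  have sg: "simple_graph V E" and con: "connected_on E V" using cg by (auto simp: connected_graph_def)
  have finV: "finite V" using sg by (simp add: simple_graph_def)
  have FV: "F \<subseteq> V" and nb: "\<forall>w\<in>V - F. card (nbhd E w \<inter> (V - F)) \<ge> g"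
    using cut by (auto simp: good_neighbor_cut_def good_neighbor_faulty_set_def)
  obtain u v where u: "u \<in> V - F" and v: "v \<in> V - F" and uv: "(u, v) \<notin> (adj_in E (V - F))\<^sup>*"
    using cut by (auto simp: good_neighbor_cut_def disconnected_on_def)
  define R where "R = (adj_in E (V - F))\<^sup>*"
  define C where "C = {w \<in> V - F. (u, w) \<in> R}"
  define D where "D = (V - F) - C"
  have noloop: "{w, w} \<notin> E" for w
  proof
    assume "{w,w} \<in> E"
    then have "card {w,w} = 2" using sg by (auto simp: simple_graph_def)
    then show False by simp
  qed
  have closed: "w \<in> C" if "c \<in> C" "w \<in> V - F" "{c, w} \<in> E" for c w
  proof -
    have "(c, w) \<in> adj_in E (V - F)" using that by (auto simp: adj_in_def C_def)
    moreover have "(u, c) \<in> R" using that by (auto simp: C_def)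
    ultimately have "(u, w) \<in> R" unfolding R_def by (meson rtrancl_into_rtrancl)
    then show ?thesis using that by (auto simp: C_def)
  qed
  have nE: "{c, d} \<notin> E" if "c \<in> C" "d \<in> D" for c d
    using closed[OF that(1)] that by (auto simp: D_def)
  have uC: "u \<in> C" using u by (auto simp: C_def R_def)
  have vD: "v \<in> D" using v uv by (auto simp: C_def D_def R_def)
  have finC: "finite C" "finite D" using finV by (auto simp: C_def D_def)
  have s1: "nbhd E u \<inter> (V - F) \<subseteq> C - {u}"
  proof
    fix w assume "w \<in> nbhd E u \<inter> (V - F)"
    then have "{w, u} \<in> E" "w \<in> V - F" by (auto simp: nbhd_def)
    then show "w \<in> C - {u}" using closed[OF uC] noloop by (auto simp: insert_commute)
  qed
  have s2: "nbhd E v \<inter> (V - F) \<subseteq> D - {v}"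
  proof
    fix w assume "w \<in> nbhd E v \<inter> (V - F)"
    then have "{w, v} \<in> E" "w \<in> V - F" by (auto simp: nbhd_def)
    then show "w \<in> D - {v}" using nE[of w v] vD noloop by (auto simp: D_def)
  qed
  have "card (nbhd E u \<inter> (V - F)) \<le> card (C - {u})" using card_mono[OF _ s1] finC by blast
  moreover have "g \<le> card (nbhd E u \<inter> (V - F))" using nb u by blast
  ultimately have "g \<le> card (C - {u})" by linarith
  moreover have "card C > 0" using finC uC by (auto simp: card_gt_0_iff)
  ultimately have cC: "card C \<ge> g + 1" using uC finC card_Diff_singleton[OF uC] 
    by linarith
  have "card (nbhd E v \<inter> (V - F)) \<le> card (D - {v})" using card_mono[OF _ s2] finC by blast
  moreover have "g \<le> card (nbhd E v \<inter> (V - F))" using nb v by blast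
  ultimately have "g \<le> card (D - {v})" by linarith
  moreover have "card D > 0" using finC vD by (auto simp: card_gt_0_iff)
  ultimately have cD: "card D \<ge> g + 1" using vD finC card_Diff_singleton[OF vD]
    by linarith
  have Fne: "F \<noteq> {}"
  proof
    assume "F = {}"
    then show False using con u v uv by (auto simp: connected_on_def)
  qed
  have nfin: "finite (nbhd E u)"
  proof (rule finite_subset[OF _ finV])
    show "nbhd E u \<subseteq> V" using sg by (auto simp: nbhd_def simple_graph_def)
  qed
  have "g \<le> degree E u" unfolding degree_def
  proof -
    have "card (nbhd E u \<inter> (V - F)) \<le> card (nbhd E u)" using card_mono[OF nfin] by blast
    moreover have "g \<le> card (nbhd E u \<inter> (V - F))" using nb u by blast
    ultimately show "g \<le> card (nbhd E u)" by linarith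
  qed
  then show ?thesis
    using nE cC cD Fne FV u by (intro exI[of _ C] exI[of _ D]) (auto simp: C_def D_def)
qed

theorem proposition1p1:
  fixes V :: "'a set" and E :: "'a set set" and g :: nat
  assumes "connected_graph V E"
    and "\<exists>F. good_neighbor_cut V E g F"
  shows "0 \<le> g \<and> int g \<le> min (int (max_degree V E)) (floor ((real (card V) - 3) / 2))
         \<and> int (card E) \<le> int (card V choose 2) - (int g + 1)^2"
proof -
  obtain F where F: "good_neighbor_cut V E g F" using assms(2) by blast
  obtain C D where CD: "C \<subseteq> V - F" "D \<subseteq> V - F" "C \<inter> D = {}" "F \<noteq> {}" "F \<subseteq> V"
    "card C \<ge> g + 1" "card D \<ge> g + 1" "\<forall>c\<in>C. \<forall>d\<in>D. {c,d} \<notin> E"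
    and du: "\<exists>u\<in>V. degree E u \<ge> g"
    using key[OF assms(1) F] by blast
  have sg: "simple_graph V E" using assms(1) by (auto simp: connected_graph_def)
  have finV: "finite V" using sg by (simp add: simple_graph_def)
  have fin: "finite C" "finite D" "finite F" using CD finV by (auto intro: finite_subset)
  have "card (F \<union> C \<union> D) = card F + card C + card D"
  proof -
    have "card (F \<union> C \<union> D) = card (F \<union> C) + card D"
      using CD fin by (intro card_Un_disjoint) auto
    moreover have "card (F \<union> C) = card F + card C"
      using CD fin by (intro card_Un_disjoint) auto
    ultimately show ?thesis by simp
  qed
  moreover have "card (F \<union> C \<union> D) \<le> card V" using CD finV by (intro card_mono) auto
  moreover have "card F \<ge> 1" using CD fin by (simp add: Suc_leI card_gt_0_iff)
  ultimately have n: "card V \<ge> 2 * g + 3" using CD by linarith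
  have fl: "int g \<le> floor ((real (card V) - 3) / 2)"
    using n by (simp add: le_floor_iff field_simps)
  obtain u where u: "u \<in> V" "degree E u \<ge> g" using du by blast
  have "degree E u \<le> max_degree V E" unfolding max_degree_def using finV u by simp
  then have md: "g \<le> max_degree V E" using u by linarith
  define P where "P = {B. B \<subseteq> V \<and> card B = 2}"
  define X where "X = (\<lambda>(c, d). {c, d}) ` (C \<times> D)"
  have cP: "card P = card V choose 2" unfolding P_def using finV by (rule n_subsets)
  have finP: "finite P" unfolding P_def using finV by (simp add: finite_subset[of _ "Pow V"] subset_eq)
  have XP: "X \<subseteq> P" using CD unfolding X_def P_def by (auto simp: card_insert_if)
  have inj: "inj_on (\<lambda>(c, d). {c, d}) (C \<times> D)"
    using CD(3) by (auto simp: inj_on_def doubleton_eq_iff)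
  have cX: "card X = card C * card D" unfolding X_def
    using card_image[OF inj] by (simp add: card_cartesian_product)
  have EP: "E \<subseteq> P - X" using sg CD(8) unfolding P_def X_def simple_graph_def by auto
  have "card E \<le> card (P - X)" using EP finP by (intro card_mono) auto
  also have "\<dots> = card P - card X" using XP finP by (simp add: card_Diff_subset finite_subset)
  finally have e0: "card E \<le> card P - card X" .
  have "card X \<le> card P" using XP finP by (rule card_mono[rotated])
  then have e: "card E + card C * card D \<le> card V choose 2" using e0 cP cX by linarith
  have "(g + 1) * (g + 1) \<le> card C * card D" using CD by (intro mult_le_mono) auto
  then have "int (card E) + (int g + 1)^2 \<le> int (card V choose 2)"
  proof -
    have "card E + (g + 1) * (g + 1) \<le> card V choose 2" using e \<open>(g + 1) * (g + 1) \<le> card C * card D\<close> by linarith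
    then have "int (card E + (g + 1) * (g + 1)) \<le> int (card V choose 2)" by linarith
    then show ?thesis by (simp add: power2_eq_square algebra_simps)
  qed
  then show ?thesis using fl md by simp
qed

end
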